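(* Let $K$ be a field of characteristic $p>0$ such that $K/k$ is a finitely generated field extension, where $k=\bigcap_{n\ge0}K^{p^n}$. Let $W$ be a subfield with $k\subseteq W\subseteq K$, and let $W_n=W\cdot K^{p^n}$. Then $\operatorname{Diff}_W(K)=\bigcup_{n\ge0}\operatorname{Diff}_{W_n}(K)$.
   Context: $\cdot$ denotes the compositum in $K$. For subfields $A\subseteq B$, $\operatorname{Diff}_A(B)$ is the union over $n\ge0$ of the sets of $A$-linear maps $D:B\to B$ with $[b_0,[b_1,[\ldots,[b_n,D]\ldots]]]=0$ for all $b_i\in B$ (elements acting by multiplication, $[X,Y]=XY-YX$). *)

theory Defs
  imports Main
begin

text \<open>The ambient field K is the type 'a :: field. Subfields are subsets of it.\<close>

definition is_subfield :: "'a::field set \<Rightarrow> bool" where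
  "is_subfield F \<longleftrightarrow> 0 \<in> F \<and> 1 \<in> F \<and>
     (\<forall>x\<in>F. \<forall>y\<in>F. x + y \<in> F \<and> x * y \<in> F) \<and>
     (\<forall>x\<in>F. - x \<in> F \<and> inverse x \<in> F)"

definition field_gen :: "'a::field set \<Rightarrow> 'a set" where
  "field_gen A = \<Inter> {F. is_subfield F \<and> A \<subseteq> F}"

definition compositum :: "'a::field set \<Rightarrow> 'a set \<Rightarrow> 'a set" where
  "compositum A B = field_gen (A \<union> B)"

definition frob_pow_field :: "nat \<Rightarrow> 'a::field set" where
  "frob_pow_field n = (\<lambda>x. x ^ (CHAR('a) ^ n)) ` UNIV"

definition perfect_core :: "'a::field set" where
  "perfect_core = (\<Inter>n. frob_pow_field n)"

definition fin_gen_over :: "'a::field set \<Rightarrow> bool" where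
  "fin_gen_over F \<longleftrightarrow> (\<exists>S. finite S \<and> field_gen (F \<union> S) = UNIV)"

definition lin_over :: "'a::field set \<Rightarrow> ('a \<Rightarrow> 'a) \<Rightarrow> bool" where
  "lin_over F D \<longleftrightarrow> (\<forall>x y. D (x + y) = D x + D y) \<and> (\<forall>a\<in>F. \<forall>x. D (a * x) = a * D x)"

definition mult_comm :: "'a::field \<Rightarrow> ('a \<Rightarrow> 'a) \<Rightarrow> ('a \<Rightarrow> 'a)" where
  "mult_comm b D = (\<lambda>x. b * D x - D (b * x))"

fun iter_comm :: "'a::field list \<Rightarrow> ('a \<Rightarrow> 'a) \<Rightarrow> ('a \<Rightarrow> 'a)" where
  "iter_comm [] D = D"
| "iter_comm (b # bs) D = mult_comm b (iter_comm bs D)"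

definition Diff :: "'a::field set \<Rightarrow> ('a \<Rightarrow> 'a) set" where
  "Diff F = {D. lin_over F D \<and>
      (\<exists>n::nat. \<forall>bs. length bs = Suc n \<longrightarrow> iter_comm bs D = (\<lambda>_. 0))}"

end

theory Submission
  imports Defs "HOL-Computational_Algebra.Primes"
begin

definition Bs :: "nat \<Rightarrow> 'a::comm_ring_1 \<Rightarrow> (nat \<Rightarrow> 'a) \<Rightarrow> 'a" where
  "Bs k c u = (\<Sum>i\<le>k. of_nat (k choose i) * (-1)^i * c^(k-i) * u i)"

lemma Bs_Suc: "Bs (Suc k) c u = c * Bs k c u - Bs k c (\<lambda>i. u (Suc i))"
proof -
  have L: "Bs (Suc k) c u = c^(Suc k) * u 0 + (\<Sum>i\<le>k. (of_nat (k choose i) + of_nat (k choose Suc i)) * (-1)^(Suc i) * c^(k-i) * u (Suc i))"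
    unfolding Bs_def by (subst sum.atMost_Suc_shift) simp
  have "c * Bs k c u = (\<Sum>i\<le>k. of_nat (k choose i) * (-1)^i * c^(Suc k-i) * u i)"
    unfolding Bs_def sum_distrib_left
    by (rule sum.cong) (auto simp: Suc_diff_le algebra_simps)
  also have "\<dots> = (\<Sum>i\<le>Suc k. of_nat (k choose i) * (-1)^i * c^(Suc k-i) * u i)"
    by (simp add: binomial_eq_0)
  also have "\<dots> = c^(Suc k) * u 0 + (\<Sum>i\<le>k. of_nat (k choose Suc i) * (-1)^(Suc i) * c^(k-i) * u (Suc i))"
    by (subst sum.atMost_Suc_shift) simp
  finally have A: "c * Bs k c u = \<dots>" .
  have B: "- Bs k c (\<lambda>i. u (Suc i)) = (\<Sum>i\<le>k. of_nat (k choose i) * (-1)^(Suc i) * c^(k-i) * u (Suc i))"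
    unfolding Bs_def sum_negf[symmetric] by (rule sum.cong) auto
  show ?thesis
    unfolding L diff_conv_add_uminus A B add.assoc sum.distrib[symmetric]
    by (intro arg_cong2[where f="(+)"] refl sum.cong) (simp_all add: ring_distribs)
qed

lemma funpow_Bs:
  fixes c :: "'a::field"
  shows "((mult_comm c) ^^ k) D x = Bs k c (\<lambda>i. D (c^i * x))"
proof (induction k arbitrary: x)
  case 0
  then show ?case by (simp add: Bs_def)
next
  case (Suc k)
  have "((mult_comm c) ^^ Suc k) D x = c * ((mult_comm c) ^^ k) D x - ((mult_comm c) ^^ k) D (c * x)"
    by (simp add: mult_comm_def)
  also have "\<dots> = c * Bs k c (\<lambda>i. D (c^i * x)) - Bs k c (\<lambda>i. D (c^(Suc i) * x))"
    by (simp add: Suc.IH mult.assoc mult.left_commute)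
  also have "\<dots> = Bs (Suc k) c (\<lambda>i. D (c^i * x))"
    by (simp add: Bs_Suc)
  finally show ?case .
qed

lemma Bs_char:
  fixes c :: "'a::field"
  assumes "CHAR('a) > 0"
  shows "Bs CHAR('a) c u = c ^ CHAR('a) * u 0 - u CHAR('a)"
proof -
  define p where "p = CHAR('a)"
  have pr: "prime p" unfolding p_def using assms prime_CHAR_semidom by blast
  have p0: "p > 0" using assms p_def by simp
  have neg: "(-1)^p = (-1::'a)"
  proof (cases "p = 2")
    case True
    then show ?thesis using uminus_CHAR_2[of "1::'a"] p_def by simp
  next
    case False
    then have "p > 2" using prime_ge_2_nat[OF pr] by simp
    then have "odd p" using prime_odd_nat[OF pr] by simp
    then show ?thesis by (rule neg_one_odd_power)
  qed
  have "Bs p c u = (\<Sum>i\<in>{0,p}. of_nat (p choose i) * (-1)^i * c^(p-i) * u i)"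
    unfolding Bs_def
  proof (intro sum.mono_neutral_right ballI)
    fix k assume "k \<in> {..p} - {0, p}"
    hence k: "k > 0" "k < p" by auto
    have "CHAR('a) dvd (p choose k)"
      unfolding p_def
      by (rule dvd_choose_prime) (use k pr in \<open>auto simp: p_def\<close>)
    hence "of_nat (p choose k) = (0 :: 'a)"
      using of_nat_eq_0_iff_char_dvd by blast
    thus "of_nat (p choose k) * (-1)^k * c ^ (p - k) * u k = 0"
      by simp
  qed auto
  also have "\<dots> = c^p * u 0 + (-1)^p * u p" using p0 by simp
  also have "\<dots> = c^p * u 0 - u p" unfolding neg by simp
  finally show ?thesis unfolding p_def .
qed

lemma funpow_char:
  fixes c :: "'a::field"
  assumes "CHAR('a) > 0"
  shows "(mult_comm c) ^^ CHAR('a) = mult_comm (c ^ CHAR('a))"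
proof (rule ext, rule ext)
  fix D x
  show "((mult_comm c) ^^ CHAR('a)) D x = mult_comm (c ^ CHAR('a)) D x"
    unfolding funpow_Bs Bs_char[OF assms] by (simp add: mult_comm_def)
qed

lemma funpow_char_pow:
  fixes c :: "'a::field"
  assumes "CHAR('a) > 0"
  shows "(mult_comm c) ^^ (CHAR('a) ^ m) = mult_comm (c ^ (CHAR('a) ^ m))"
proof (induction m)
  case 0
  then show ?case by simp
next
  case (Suc m)
  have "(mult_comm c) ^^ (CHAR('a) ^ Suc m) = ((mult_comm c) ^^ (CHAR('a) ^ m)) ^^ CHAR('a)"
    by (metis funpow_mult power_Suc2)
  also have "\<dots> = mult_comm ((c ^ (CHAR('a) ^ m)) ^ CHAR('a))"
    by (simp add: Suc.IH funpow_char[OF assms])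
  also have "\<dots> = mult_comm (c ^ (CHAR('a) ^ Suc m))"
    by (simp only: power_mult[symmetric] power_Suc2)
  finally show ?case .
qed

lemma iter_comm_replicate: "iter_comm (replicate k c) D = ((mult_comm c) ^^ k) D"
  by (induction k) auto

lemma iter_comm_long:
  assumes "\<forall>bs. length bs = Suc n \<longrightarrow> iter_comm bs D = (\<lambda>_. 0)"
  shows "length bs \<ge> Suc n \<Longrightarrow> iter_comm bs D = (\<lambda>_. 0)"
proof (induction bs)
  case Nil
  then show ?case by simp
next
  case (Cons b bs)
  show ?case
  proof (cases "length (b # bs) = Suc n")
    case True
    then show ?thesis using assms by blast
  next
    case False
    then have "iter_comm bs D = (\<lambda>_. 0)" using Cons by simp
    then show ?thesis by (simp add: mult_comm_def)
  qed
qed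

lemma field_gen_sup: "A \<subseteq> field_gen A"
  unfolding field_gen_def by blast

lemma field_gen_least: "is_subfield F \<Longrightarrow> A \<subseteq> F \<Longrightarrow> field_gen A \<subseteq> F"
  unfolding field_gen_def by blast

lemma lin_set_subfield:
  fixes D :: "'a::field \<Rightarrow> 'a"
  assumes add: "\<forall>x y. D (x + y) = D x + D y"
  shows "is_subfield {a. \<forall>x. D (a * x) = a * D x}"
proof -
  have D0: "D 0 = 0" using add by (metis add_cancel_right_right add_0)
  have Dneg: "D (- x) = - D x" for x
    using add[rule_format, of x "-x"] D0 by (simp add: eq_neg_iff_add_eq_0 add.commute)
  show ?thesis unfolding is_subfield_def
  proof (intro conjI ballI)
    show "0 \<in> {a. \<forall>x. D (a * x) = a * D x}" using D0 by simp
    show "1 \<in> {a. \<forall>x. D (a * x) = a * D x}" by simp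
  next
    fix a b assume a: "a \<in> {a. \<forall>x. D (a * x) = a * D x}" and b: "b \<in> {a. \<forall>x. D (a * x) = a * D x}"
    show "a + b \<in> {a. \<forall>x. D (a * x) = a * D x}"
      using a b add by (simp add: distrib_right)
    show "a * b \<in> {a. \<forall>x. D (a * x) = a * D x}"
      using a b by (simp add: mult.assoc)
  next
    fix a assume a: "a \<in> {a. \<forall>x. D (a * x) = a * D x}"
    show "- a \<in> {a. \<forall>x. D (a * x) = a * D x}"
      using a Dneg by simp
    show "inverse a \<in> {a. \<forall>x. D (a * x) = a * D x}"
    proof (cases "a = 0")
      case True then show ?thesis using D0 by simp
    next
      case False
      show ?thesis
      proof (simp, intro allI)
        fix x
        from a have h: "D (a * y) = a * D y" for y by simp
        have e: "a * D (inverse a * x) = D x"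
          using h[of "inverse a * x"] False by (simp add: mult.assoc[symmetric])
        have "D (inverse a * x) = inverse a * (a * D (inverse a * x))"
          using False by (simp add: mult.assoc[symmetric])
        then show "D (inverse a * x) = inverse a * D x" unfolding e .
      qed
    qed
  qed
qed

theorem lemmaL2:
  fixes W :: "'a::field set"
  assumes "CHAR('a) > 0"
    and "fin_gen_over (perfect_core :: 'a set)"
    and "is_subfield W"
    and "perfect_core \<subseteq> W"
  shows "Diff W = (\<Union>n. Diff (compositum W (frob_pow_field n)))"
proof
  show "(\<Union>n. Diff (compositum W (frob_pow_field n))) \<subseteq> Diff W"
  proof
    fix D assume "D \<in> (\<Union>n. Diff (compositum W (frob_pow_field n)))"
    then obtain m where "D \<in> Diff (compositum W (frob_pow_field m))" by blast
    moreover have "W \<subseteq> compositum W (frob_pow_field m)"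
      unfolding compositum_def using field_gen_sup by blast
    ultimately show "D \<in> Diff W" unfolding Diff_def lin_over_def by blast
  qed
next
  show "Diff W \<subseteq> (\<Union>n. Diff (compositum W (frob_pow_field n)))"
  proof
    fix D assume D: "D \<in> Diff W"
    then obtain n where n: "\<forall>bs. length bs = Suc n \<longrightarrow> iter_comm bs D = (\<lambda>_. 0)"
      and lin: "lin_over W D" unfolding Diff_def by blast
    define p where "p = CHAR('a)"
    have p2: "p \<ge> 2" using assms(1) p_def prime_CHAR_semidom prime_ge_2_nat by blast
    have big: "Suc n \<le> p ^ Suc n"
    proof -
      have "Suc n < 2 ^ Suc n" by (rule less_exp)
      also have "\<dots> \<le> p ^ Suc n" using p2 power_mono[of 2 p "Suc n"] by simp
      finally show ?thesis by (rule less_imp_le)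
    qed
    have frob: "\<forall>x. D (a * x) = a * D x" if "a \<in> frob_pow_field (Suc n)" for a
    proof
      fix x
      from that obtain c where a: "a = c ^ (p ^ Suc n)" unfolding frob_pow_field_def p_def by blast
      have "iter_comm (replicate (p ^ Suc n) c) D = (\<lambda>_. 0)"
        by (rule iter_comm_long[OF n]) (use big in simp)
      then have "mult_comm a D = (\<lambda>_. 0)"
        unfolding iter_comm_replicate a p_def funpow_char_pow[OF assms(1)] .
      then have "a * D x - D (a * x) = 0" unfolding mult_comm_def by meson
      then show "D (a * x) = a * D x" by simp
    qed
    have add: "\<forall>x y. D (x + y) = D x + D y" using lin unfolding lin_over_def by blast
    have "compositum W (frob_pow_field (Suc n)) \<subseteq> {a. \<forall>x. D (a * x) = a * D x}"
      unfolding compositum_def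
      by (rule field_gen_least[OF lin_set_subfield[OF add]])
         (use lin frob in \<open>auto simp: lin_over_def\<close>)
    then have "D \<in> Diff (compositum W (frob_pow_field (Suc n)))"
      unfolding Diff_def lin_over_def using add n by blast
    then show "D \<in> (\<Union>n. Diff (compositum W (frob_pow_field n)))" by blast
  qed
qed

end
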